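(* Let $R$ be a Dedekind domain, $I\subseteq R$ an ideal with $R/I$ finite, and $G\in R^{n\times n}$. Let $U,V\in\mathrm{GL}_n(R/I)$ and $d_1,\ldots,d_n\in R$ with $d_{i+1}R+I\subseteq d_iR+I$ for every $i$ be such that $G\equiv U D V\bmod I$ with $D=\mathrm{diag}(d_1,\ldots,d_n)$. Consider a random symmetric $n\times n$ matrix $X\in R^{n\times n}$ whose upper-triangular entries $\{X_{i,j}:i\leq j\}$ have independent and uniformly distributed reductions in $R/I$. Then $$\mathbb{P}\bigl(G^{T}XG\equiv 0\bmod I\bigr)=\prod_{i=1}^n\prod_{j=i}^n\frac{\mathcal{N}_R(d_id_jR+I)}{\mathcal{N}_R(I)}.$$
   Context: The norm of an ideal $J\subseteq R$ is $\mathcal{N}_R(J)=\#(R/J)$. Such $U,V,d_1,\ldots,d_n$ (a Smith normal form of $G$ over $R/I$) always exist since $R/I$ is a principal ideal ring. *)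

theory Defs
  imports "HOL-Computational_Algebra.Polynomial" "HOL-Computational_Algebra.Fraction_Field"
    "HOL-Probability.Probability_Mass_Function" "Jordan_Normal_Form.Matrix"
begin

definition is_ideal :: "'a::comm_ring_1 set \<Rightarrow> bool" where
  "is_ideal J \<longleftrightarrow> 0 \<in> J \<and> (\<forall>x\<in>J. \<forall>y\<in>J. x + y \<in> J) \<and> (\<forall>x\<in>J. \<forall>r. r * x \<in> J)"

definition prime_ideal :: "'a::comm_ring_1 set \<Rightarrow> bool" where
  "prime_ideal P \<longleftrightarrow> is_ideal P \<and> P \<noteq> UNIV \<and> (\<forall>a b. a * b \<in> P \<longrightarrow> a \<in> P \<or> b \<in> P)"

definition maximal_ideal :: "'a::comm_ring_1 set \<Rightarrow> bool" where
  "maximal_ideal M \<longleftrightarrow> is_ideal M \<and> M \<noteq> UNIV \<and>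
     (\<forall>J. is_ideal J \<and> M \<subseteq> J \<longrightarrow> J = M \<or> J = UNIV)"

definition noetherian_ring :: "'a::comm_ring_1 itself \<Rightarrow> bool" where
  "noetherian_ring _ \<longleftrightarrow> (\<forall>J::'a set. is_ideal J \<longrightarrow>
     (\<exists>gs. J = {\<Sum>i<length gs. r i * gs ! i | r. True}))"

definition integrally_closed :: "'a::idom itself \<Rightarrow> bool" where
  "integrally_closed _ \<longleftrightarrow> (\<forall>(p::'a poly) (x::'a fract).
     lead_coeff p = 1 \<and> poly (map_poly (\<lambda>a. Fraction_Field.Fract a 1) p) x = 0 \<longrightarrow> (\<exists>a. x = Fraction_Field.Fract a 1))"

definition dedekind_domain :: "'a::idom itself \<Rightarrow> bool" where
  "dedekind_domain T \<longleftrightarrow> noetherian_ring T \<and> integrally_closed T \<and>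
     (\<forall>P::'a set. prime_ideal P \<and> P \<noteq> {0} \<longrightarrow> maximal_ideal P)"

definition coset :: "'a::comm_ring_1 set \<Rightarrow> 'a \<Rightarrow> 'a set" where
  "coset J x = {y. y - x \<in> J}"

definition quot :: "'a::comm_ring_1 set \<Rightarrow> 'a set set" where
  "quot J = range (coset J)"

definition ideal_norm :: "'a::comm_ring_1 set \<Rightarrow> nat" where
  "ideal_norm J = card (quot J)"

definition princ_plus :: "'a::comm_ring_1 \<Rightarrow> 'a set \<Rightarrow> 'a set" where
  "princ_plus d J = {d * r + x | r x. x \<in> J}"

definition cong_mat :: "'a::comm_ring_1 set \<Rightarrow> 'a mat \<Rightarrow> 'a mat \<Rightarrow> bool" where
  "cong_mat J A B \<longleftrightarrow> dim_row A = dim_row B \<and> dim_col A = dim_col B \<and>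
     (\<forall>i<dim_row A. \<forall>j<dim_col A. A $$ (i, j) - B $$ (i, j) \<in> J)"

text \<open>A matrix over R representing an element of GL_n(R/J): invertible modulo J.\<close>
definition invertible_mod :: "'a::comm_ring_1 set \<Rightarrow> nat \<Rightarrow> 'a mat \<Rightarrow> bool" where
  "invertible_mod J n U \<longleftrightarrow> U \<in> carrier_mat n n \<and>
     (\<exists>W \<in> carrier_mat n n. cong_mat J (U * W) (1\<^sub>m n) \<and> cong_mat J (W * U) (1\<^sub>m n))"

definition diag_of :: "nat \<Rightarrow> (nat \<Rightarrow> 'a::zero) \<Rightarrow> 'a mat" where
  "diag_of n d = mat n n (\<lambda>(i, j). if i = j then d i else 0)"

definition upper_idx :: "nat \<Rightarrow> (nat \<times> nat) set" where
  "upper_idx n = {(i, j). i \<le> j \<and> j < n}"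

definition upper_red :: "'a::comm_ring_1 set \<Rightarrow> nat \<Rightarrow> 'a mat \<Rightarrow> (nat \<times> nat \<Rightarrow> 'a set)" where
  "upper_red J n X = restrict (\<lambda>(i, j). coset J (X $$ (i, j))) (upper_idx n)"

end

theory Submission
  imports Defs
begin

lemma ideal_0: "is_ideal I \<Longrightarrow> 0 \<in> I" by (simp add: is_ideal_def)
lemma ideal_add: "is_ideal I \<Longrightarrow> x \<in> I \<Longrightarrow> y \<in> I \<Longrightarrow> x + y \<in> I" by (simp add: is_ideal_def)
lemma ideal_multL: "is_ideal I \<Longrightarrow> x \<in> I \<Longrightarrow> r * x \<in> I" by (simp add: is_ideal_def)
lemma ideal_multR: "is_ideal I \<Longrightarrow> x \<in> I \<Longrightarrow> x * r \<in> I"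
  by (metis ideal_multL mult.commute)
lemma ideal_neg: "is_ideal I \<Longrightarrow> x \<in> I \<Longrightarrow> - x \<in> I"
  by (metis ideal_multL mult_minus1)
lemma ideal_diff: "is_ideal I \<Longrightarrow> x \<in> I \<Longrightarrow> y \<in> I \<Longrightarrow> x - y \<in> I"
  by (metis ideal_add ideal_neg diff_conv_add_uminus)
lemma ideal_diff_sym: "is_ideal I \<Longrightarrow> x - y \<in> I \<Longrightarrow> y - x \<in> I"
  by (metis ideal_neg minus_diff_eq)
lemma ideal_diff_trans: "is_ideal I \<Longrightarrow> x - y \<in> I \<Longrightarrow> y - z \<in> I \<Longrightarrow> x - z \<in> I"
  by (metis ideal_add diff_add_eq add_diff_cancel_left' diff_add_cancel add.commute)
lemma ideal_sum: "is_ideal I \<Longrightarrow> (\<And>x. x \<in> A \<Longrightarrow> f x \<in> I) \<Longrightarrow> sum f A \<in> I"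
  by (induction A rule: infinite_finite_induct) (auto simp: ideal_0 ideal_add)

lemma mem_coset: "is_ideal I \<Longrightarrow> x \<in> coset I x"
  by (simp add: coset_def ideal_0)

lemma coset_eq: "is_ideal I \<Longrightarrow> coset I x = coset I y \<longleftrightarrow> x - y \<in> I"
proof
  assume "is_ideal I" "coset I x = coset I y"
  then have "y \<in> coset I x" using mem_coset by metis
  then show "x - y \<in> I" using \<open>is_ideal I\<close> ideal_diff_sym by (auto simp: coset_def)
next
  assume "is_ideal I" "x - y \<in> I"
  then show "coset I x = coset I y"
    unfolding coset_def using ideal_diff_trans ideal_diff_sym by blast
qed

definition rep :: "'a set \<Rightarrow> 'a" where "rep c = (SOME x. x \<in> c)"

lemma rep_coset: "is_ideal I \<Longrightarrow> rep (coset I x) - x \<in> I"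
proof -
  assume I: "is_ideal I"
  have "rep (coset I x) \<in> coset I x" unfolding rep_def by (rule someI, rule mem_coset[OF I])
  then show ?thesis by (simp add: coset_def)
qed

lemma coset_rep: "is_ideal I \<Longrightarrow> c \<in> quot I \<Longrightarrow> coset I (rep c) = c"
  unfolding quot_def using rep_coset coset_eq by fastforce

lemma coset_in_quot: "coset I x \<in> quot I" by (simp add: quot_def)

lemma card_fibers:
  assumes "finite A"
  shows "card A = (\<Sum>y\<in>f ` A. card {x\<in>A. f x = y})"
proof -
  have "A = (\<Union>y\<in>f ` A. {x\<in>A. f x = y})" by auto
  then have "card A = card (\<Union>y\<in>f ` A. {x\<in>A. f x = y})" by simp
  also have "\<dots> = (\<Sum>y\<in>f ` A. card {x\<in>A. f x = y})"
    by (rule card_UN_disjoint) (use assms in auto)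
  finally show ?thesis .
qed

lemma image_add_coset: "is_ideal I \<Longrightarrow> (\<lambda>x. x + y) ` coset I z = coset I (z + y)"
  unfolding coset_def
  by (auto simp: image_iff intro!: exI[where x="_ - y"]) (auto simp: algebra_simps)

lemma count_L0:
  fixes I K :: "'a::comm_ring_1 set" and g :: "'a \<Rightarrow> 'b"
  assumes I: "is_ideal I" and fin: "finite (quot I)" and IK: "I \<subseteq> K"
    and gK: "\<And>x y. g x = g y \<longleftrightarrow> x - y \<in> K"
  shows "card (quot I) = card (coset I ` K) * card (range g)"
proof -
  define \<Phi> where "\<Phi> c = g (rep c)" for c
  have \<Phi>c: "\<Phi> (coset I y) = g y" for y
    unfolding \<Phi>_def using gK IK rep_coset[OF I, of y] by blast
  have im: "\<Phi> ` quot I = range g"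
    unfolding quot_def using \<Phi>c by (auto simp: image_iff)
  have fib: "card {c\<in>quot I. \<Phi> c = z} = card (coset I ` K)" if "z \<in> range g" for z
  proof -
    obtain y0 where z: "z = g y0" using \<open>z \<in> range g\<close> by auto
    have "{c\<in>quot I. \<Phi> c = z} = coset I ` {x. g x = g y0}"
      unfolding quot_def z using \<Phi>c by auto
    also have "{x. g x = g y0} = (\<lambda>x. x + y0) ` K"
      using gK by (auto simp: image_iff intro!: bexI[where x="_ - y0"])
    also have "coset I ` ((\<lambda>x. x + y0) ` K) = image (\<lambda>x. x + y0) ` (coset I ` K)"
      using image_add_coset[OF I] by (auto simp: image_image)
    also have "card \<dots> = card (coset I ` K)"
    proof (rule card_image)
      have "inj (\<lambda>x::'a. x + y0)" by (auto intro: injI)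
      then show "inj_on (image (\<lambda>x. x + y0)) (coset I ` K)"
        by (auto intro!: inj_onI simp: inj_image_eq_iff)
    qed
    finally show ?thesis .
  qed
  have "card (quot I) = (\<Sum>z\<in>\<Phi> ` quot I. card {c\<in>quot I. \<Phi> c = z})"
    by (rule card_fibers[OF fin])
  also have "\<dots> = (\<Sum>z\<in>range g. card (coset I ` K))"
    unfolding im using fib by simp
  finally show ?thesis by simp
qed

lemma princ_plus_ideal:
  assumes I: "is_ideal I" shows "is_ideal (princ_plus a I)"
  unfolding is_ideal_def
proof (intro conjI ballI allI)
  show "0 \<in> princ_plus a I" unfolding princ_plus_def using ideal_0[OF I]
    by (auto intro!: exI[where x=0])
next
  fix x y assume "x \<in> princ_plus a I" "y \<in> princ_plus a I"
  then obtain r u r' u' where "u \<in> I" "u' \<in> I" "x = a * r + u" "y = a * r' + u'"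
    unfolding princ_plus_def by auto
  then have "x + y = a * (r + r') + (u + u')" "u + u' \<in> I"
    using ideal_add[OF I] by (auto simp: algebra_simps)
  then show "x + y \<in> princ_plus a I" unfolding princ_plus_def by blast
next
  fix x s assume "x \<in> princ_plus a I"
  then obtain r u where "u \<in> I" "x = a * r + u"
    unfolding princ_plus_def by auto
  then have "s * x = a * (s * r) + s * u" "s * u \<in> I"
    using ideal_multL[OF I \<open>u \<in> I\<close>] by (auto simp: algebra_simps)
  then show "s * x \<in> princ_plus a I" unfolding princ_plus_def by blast
qed

lemma I_sub_princ_plus: "I \<subseteq> princ_plus a I"
  unfolding princ_plus_def by (auto intro: exI[where x=0])

lemma kernel_count:
  fixes I :: "'a::comm_ring_1 set"
  assumes I: "is_ideal I" and fin: "finite (quot I)"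
  shows "card {c\<in>quot I. a * rep c \<in> I} = ideal_norm (princ_plus a I)"
proof -
  define J where "J = princ_plus a I"
  define K where "K = {x. a * x \<in> I}"
  have J: "is_ideal J" unfolding J_def by (rule princ_plus_ideal[OF I])
  have IJ: "I \<subseteq> J" unfolding J_def by (rule I_sub_princ_plus)
  have L2: "card (quot I) = card (coset I ` J) * card (quot J)"
    unfolding quot_def[of J]
    by (rule count_L0[OF I fin IJ]) (rule coset_eq[OF J])
  have IK: "I \<subseteq> K" unfolding K_def using ideal_multL[OF I] by auto
  have L1: "card (quot I) = card (coset I ` K) * card (range (\<lambda>x. coset I (a * x)))"
    by (rule count_L0[OF I fin IK]) (simp add: coset_eq[OF I] K_def right_diff_distrib)
  have "range (\<lambda>x. coset I (a * x)) = coset I ` J"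
  proof
    show "range (\<lambda>x. coset I (a * x)) \<subseteq> coset I ` J"
      unfolding J_def princ_plus_def using ideal_0[OF I] by force
    show "coset I ` J \<subseteq> range (\<lambda>x. coset I (a * x))"
    proof
      fix c assume "c \<in> coset I ` J"
      then obtain r x where "x \<in> I" "c = coset I (a * r + x)" unfolding J_def princ_plus_def by auto
      then have "c = coset I (a * r)" by (simp add: coset_eq[OF I])
      then show "c \<in> range (\<lambda>x. coset I (a * x))" by auto
    qed
  qed
  with L1 have L1': "card (quot I) = card (coset I ` K) * card (coset I ` J)" by simp
  have "finite (coset I ` J)" by (rule finite_subset[OF _ fin]) (auto simp: quot_def)
  moreover have "coset I ` J \<noteq> {}" using ideal_0[OF J] by auto
  ultimately have pos: "card (coset I ` J) > 0" by (simp add: card_gt_0_iff)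
  from L1' L2 pos have eq: "card (coset I ` K) = card (quot J)" by simp
  have "{c\<in>quot I. a * rep c \<in> I} = coset I ` K"
  proof
    show "{c\<in>quot I. a * rep c \<in> I} \<subseteq> coset I ` K"
      using coset_rep[OF I] unfolding K_def by (auto simp: image_iff)
    show "coset I ` K \<subseteq> {c\<in>quot I. a * rep c \<in> I}"
    proof
      fix c assume "c \<in> coset I ` K"
      then obtain x where x: "x \<in> K" "c = coset I x" by auto
      have "a * rep (coset I x) = a * (rep (coset I x) - x) + a * x" by (simp add: algebra_simps)
      moreover have "a * (rep (coset I x) - x) \<in> I" by (rule ideal_multL[OF I rep_coset[OF I]])
      ultimately show "c \<in> {c\<in>quot I. a * rep c \<in> I}"
        using x ideal_add[OF I] by (auto simp: K_def coset_in_quot)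
    qed
  qed
  with eq show ?thesis unfolding ideal_norm_def J_def by simp
qed


lemma cong_refl: "is_ideal I \<Longrightarrow> cong_mat I A A"
  by (simp add: cong_mat_def ideal_0)

lemma cong_sym: "is_ideal I \<Longrightarrow> cong_mat I A B \<Longrightarrow> cong_mat I B A"
  by (auto simp: cong_mat_def intro: ideal_diff_sym)

lemma cong_trans: "is_ideal I \<Longrightarrow> cong_mat I A B \<Longrightarrow> cong_mat I B C \<Longrightarrow> cong_mat I A C"
  unfolding cong_mat_def by (metis ideal_diff_trans)

lemma cong_transpose: "cong_mat I A B \<Longrightarrow> cong_mat I (transpose_mat A) (transpose_mat B)"
  by (auto simp: cong_mat_def)

lemma cong_mult:
  assumes I: "is_ideal I" and AA: "cong_mat I A A'" and BB: "cong_mat I B B'"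
    and d: "dim_col A = dim_row B"
  shows "cong_mat I (A * B) (A' * B')"
  unfolding cong_mat_def
proof (intro conjI allI impI)
  show "dim_row (A * B) = dim_row (A' * B')" "dim_col (A * B) = dim_col (A' * B')"
    using AA BB by (auto simp: cong_mat_def)
  fix i j assume i: "i < dim_row (A * B)" and j: "j < dim_col (A * B)"
  have dims: "dim_row A' = dim_row A" "dim_col A' = dim_col A" "dim_row B' = dim_row B" "dim_col B' = dim_col B"
    using AA BB by (auto simp: cong_mat_def)
  have "(A * B) $$ (i, j) - (A' * B') $$ (i, j) =
        (\<Sum>k\<in>{0..<dim_row B}. (A $$ (i,k) - A' $$ (i,k)) * B $$ (k,j) + A' $$ (i,k) * (B $$ (k,j) - B' $$ (k,j)))"
    using i j d dims by (simp add: scalar_prod_def sum_subtractf[symmetric] algebra_simps)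
  also have "\<dots> \<in> I"
  proof (rule ideal_sum[OF I])
    fix k assume "k \<in> {0..<dim_row B}"
    then have "A $$ (i,k) - A' $$ (i,k) \<in> I" "B $$ (k,j) - B' $$ (k,j) \<in> I"
      using AA BB i j d by (auto simp: cong_mat_def)
    then show "(A $$ (i,k) - A' $$ (i,k)) * B $$ (k,j) + A' $$ (i,k) * (B $$ (k,j) - B' $$ (k,j)) \<in> I"
      using I by (intro ideal_add ideal_multL ideal_multR) auto
  qed
  finally show "(A * B) $$ (i, j) - (A' * B') $$ (i, j) \<in> I" .
qed

lemma cong_sandwich:
  fixes V W Z Z' :: "'a::comm_ring_1 mat"
  assumes I: "is_ideal I" and V: "V \<in> carrier_mat n n" and W: "W \<in> carrier_mat n n"
    and VW: "cong_mat I (V * W) (1\<^sub>m n)"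
    and Z: "Z \<in> carrier_mat n n" and Z': "Z' \<in> carrier_mat n n"
  shows "cong_mat I (transpose_mat V * Z * V) (transpose_mat V * Z' * V) \<longleftrightarrow> cong_mat I Z Z'"
proof
  assume c: "cong_mat I Z Z'"
  show "cong_mat I (transpose_mat V * Z * V) (transpose_mat V * Z' * V)"
    using V Z by (intro cong_mult[OF I] cong_refl[OF I] c) auto
next
  assume c: "cong_mat I (transpose_mat V * Z * V) (transpose_mat V * Z' * V)"
  have t1: "cong_mat I (transpose_mat (V * W)) (1\<^sub>m n)"
    using cong_transpose[OF VW] by simp
  have key: "cong_mat I (transpose_mat (V * W) * Y * (V * W)) Y" if Y: "Y \<in> carrier_mat n n" for Y
  proof -
    have "cong_mat I (transpose_mat (V * W) * Y * (V * W)) (1\<^sub>m n * Y * 1\<^sub>m n)"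
      using V W Y by (intro cong_mult[OF I] cong_refl[OF I] t1 VW) auto
    then show ?thesis using Y by simp
  qed
  have eq: "transpose_mat (V * W) * Y * (V * W) = transpose_mat W * (transpose_mat V * Y * V) * W"
    if Y: "Y \<in> carrier_mat n n" for Y
    using V W Y by (simp add: transpose_mult[OF V W] assoc_mult_mat[of _ n n _ n _ n])
  have "cong_mat I (transpose_mat W * (transpose_mat V * Z * V) * W) (transpose_mat W * (transpose_mat V * Z' * V) * W)"
    using V W Z by (intro cong_mult[OF I] cong_refl[OF I] c) auto
  then have "cong_mat I (transpose_mat (V * W) * Z * (V * W)) (transpose_mat (V * W) * Z' * (V * W))"
    using eq Z Z' by simp
  then show "cong_mat I Z Z'"
    using key[OF Z] key[OF Z'] by (meson cong_sym cong_trans I)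
qed

definition mk_sym :: "nat \<Rightarrow> (nat \<times> nat \<Rightarrow> 'a set) \<Rightarrow> 'a mat" where
  "mk_sym n f = mat n n (\<lambda>(i, j). rep (f (min i j, max i j)))"

lemma mk_sym_carrier: "mk_sym n f \<in> carrier_mat n n"
  by (simp add: mk_sym_def)

lemma mk_sym_sym: "transpose_mat (mk_sym n f) = mk_sym n f"
  by (rule eq_matI) (auto simp: mk_sym_def min.commute max.commute)

lemma upper_red_in: "upper_red I n X \<in> PiE (upper_idx n) (\<lambda>_. quot I)"
  by (auto simp: upper_red_def coset_in_quot)

lemma upper_red_mk_sym:
  assumes I: "is_ideal I" and f: "f \<in> PiE (upper_idx n) (\<lambda>_. quot I)"
  shows "upper_red I n (mk_sym n f) = f"
proof
  fix x show "upper_red I n (mk_sym n f) x = f x"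
  proof (cases "x \<in> upper_idx n")
    case True
    then obtain i j where x: "x = (i, j)" "i \<le> j" "j < n" by (auto simp: upper_idx_def)
    then show ?thesis using f True coset_rep[OF I]
      by (auto simp: upper_red_def mk_sym_def min_def max_def)
  next
    case False
    then show ?thesis using f by (auto simp: upper_red_def)
  qed
qed

lemma upper_red_cong:
  assumes I: "is_ideal I" and c: "cong_mat I X Y" and X: "X \<in> carrier_mat n n"
  shows "upper_red I n X = upper_red I n Y"
  unfolding upper_red_def
  using c X by (intro restrict_ext) (auto simp: upper_idx_def cong_mat_def coset_eq[OF I])

lemma sym_idx: "Y \<in> carrier_mat n n \<Longrightarrow> transpose_mat Y = Y \<Longrightarrow> i < n \<Longrightarrow> j < n \<Longrightarrow> Y $$ (j, i) = Y $$ (i, j)"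
  by (metis carrier_matD index_transpose_mat(1))

lemma cong_mk_sym:
  assumes I: "is_ideal I" and Y: "Y \<in> carrier_mat n n" and s: "transpose_mat Y = Y"
  shows "cong_mat I Y (mk_sym n (upper_red I n Y))"
  unfolding cong_mat_def
proof (intro conjI allI impI)
  show "dim_row Y = dim_row (mk_sym n (upper_red I n Y))" "dim_col Y = dim_col (mk_sym n (upper_red I n Y))"
    using Y by (auto simp: mk_sym_def)
  fix i j assume i: "i < dim_row Y" and j: "j < dim_col Y"
  have ij: "(min i j, max i j) \<in> upper_idx n" using i j Y by (auto simp: upper_idx_def)
  have e: "Y $$ (min i j, max i j) = Y $$ (i, j)"
    using sym_idx[OF Y s] i j Y by (auto simp: min_def max_def)
  have "mk_sym n (upper_red I n Y) $$ (i, j) = rep (coset I (Y $$ (i, j)))"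
    using i j Y ij e by (simp add: mk_sym_def upper_red_def)
  then show "Y $$ (i, j) - mk_sym n (upper_red I n Y) $$ (i, j) \<in> I"
    using rep_coset[OF I] ideal_diff_sym[OF I] by metis
qed

lemma diag_sandwich:
  assumes Y: "Y \<in> carrier_mat n n" and i: "i < n" and j: "j < n"
  shows "(diag_of n d * Y * diag_of n d) $$ (i, j) = d i * Y $$ (i, j) * d j"
proof -
  have DY: "(diag_of n d * Y) $$ (i, k) = d i * Y $$ (i, k)" if "k < n" for k
    using Y i that by (simp add: diag_of_def scalar_prod_def if_distrib[of "\<lambda>x. x * _"] sum.delta cong: if_cong)
  have "(diag_of n d * Y * diag_of n d) $$ (i, j) = (\<Sum>k\<in>{0..<n}. (diag_of n d * Y) $$ (i, k) * (if k = j then d k else 0))"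
    using Y i j by (simp add: diag_of_def scalar_prod_def)
  also have "\<dots> = (diag_of n d * Y) $$ (i, j) * d j"
    by (simp add: if_distrib[of "\<lambda>x. _ * x"] sum.delta' j cong: if_cong)
  finally show ?thesis using DY[OF j] by simp
qed

lemma diag_cond:
  assumes I: "is_ideal I" and Y: "Y \<in> carrier_mat n n" and s: "transpose_mat Y = Y"
  shows "cong_mat I (diag_of n d * Y * diag_of n d) (0\<^sub>m n n) \<longleftrightarrow>
    (\<forall>(i,j)\<in>upper_idx n. d i * d j * rep (upper_red I n Y (i, j)) \<in> I)"
proof -
  have dims: "diag_of n d * Y * diag_of n d \<in> carrier_mat n n"
  proof -
    have D: "diag_of n d \<in> carrier_mat n n" by (simp add: diag_of_def)
    show ?thesis using D Y by (metis mult_carrier_mat)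
  qed
  have "cong_mat I (diag_of n d * Y * diag_of n d) (0\<^sub>m n n) \<longleftrightarrow> (\<forall>i<n. \<forall>j<n. d i * Y $$ (i, j) * d j \<in> I)"
  proof -
    have "cong_mat I (diag_of n d * Y * diag_of n d) (0\<^sub>m n n) \<longleftrightarrow>
        (\<forall>i<n. \<forall>j<n. (diag_of n d * Y * diag_of n d) $$ (i, j) \<in> I)"
      unfolding cong_mat_def using carrier_matD[OF dims] by (simp del: index_mult_mat)
    also have "\<dots> \<longleftrightarrow> (\<forall>i<n. \<forall>j<n. d i * Y $$ (i, j) * d j \<in> I)"
      using diag_sandwich[OF Y] by simp
    finally show ?thesis .
  qed
  also have "\<dots> \<longleftrightarrow> (\<forall>(i,j)\<in>upper_idx n. d i * d j * Y $$ (i, j) \<in> I)"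
  proof
    assume "\<forall>i<n. \<forall>j<n. d i * Y $$ (i, j) * d j \<in> I"
    then show "\<forall>(i,j)\<in>upper_idx n. d i * d j * Y $$ (i, j) \<in> I"
      by (auto simp: upper_idx_def mult.commute mult.left_commute mult.assoc)
  next
    assume a: "\<forall>(i,j)\<in>upper_idx n. d i * d j * Y $$ (i, j) \<in> I"
    show "\<forall>i<n. \<forall>j<n. d i * Y $$ (i, j) * d j \<in> I"
    proof (intro allI impI)
      fix i j assume i: "i < n" and j: "j < n"
      show "d i * Y $$ (i, j) * d j \<in> I"
      proof (cases "i \<le> j")
        case True
        then have "d i * d j * Y $$ (i, j) \<in> I" using a j by (auto simp: upper_idx_def)
        then show ?thesis by (metis mult.commute mult.assoc)
      next
        case False
        then have "(j, i) \<in> upper_idx n" using i by (auto simp: upper_idx_def)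
        then have "d j * d i * Y $$ (j, i) \<in> I" using a by auto
        then have "d i * d j * Y $$ (i, j) \<in> I" using sym_idx[OF Y s i j] by (metis mult.commute)
        then show ?thesis by (metis mult.commute mult.assoc)
      qed
    qed
  qed
  also have "\<dots> \<longleftrightarrow> (\<forall>(i,j)\<in>upper_idx n. d i * d j * rep (upper_red I n Y (i, j)) \<in> I)"
  proof -
    have "d i * d j * Y $$ (i, j) \<in> I \<longleftrightarrow> d i * d j * rep (upper_red I n Y (i, j)) \<in> I"
      if "(i, j) \<in> upper_idx n" for i j
    proof -
      have r: "rep (upper_red I n Y (i, j)) - Y $$ (i, j) \<in> I"
        using that rep_coset[OF I] by (simp add: upper_red_def)
      have m: "d i * d j * rep (upper_red I n Y (i, j)) - d i * d j * Y $$ (i, j) \<in> I"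
        using ideal_multL[OF I r, of "d i * d j"] by (simp add: right_diff_distrib)
      show ?thesis
        using m ideal_add[OF I] ideal_diff[OF I] ideal_diff_sym[OF I m]
        by (metis diff_add_cancel)
    qed
    then show ?thesis by auto
  qed
  finally show ?thesis .
qed


theorem theorem2p3:
  fixes I :: "'a::idom set" and n :: nat and G U V :: "'a mat" and d :: "nat \<Rightarrow> 'a"
    and Xd :: "'a mat pmf"
  assumes ded: "dedekind_domain TYPE('a)"
    and I: "is_ideal I" and fin: "finite (quot I)"
    and G: "G \<in> carrier_mat n n"
    and U: "invertible_mod I n U" and V: "invertible_mod I n V"
    and chain: "\<And>i. i + 1 < n \<Longrightarrow> princ_plus (d (i + 1)) I \<subseteq> princ_plus (d i) I"
    and SNF: "cong_mat I G (U * diag_of n d * V)"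
    and sym: "\<And>X. X \<in> set_pmf Xd \<Longrightarrow> X \<in> carrier_mat n n \<and> transpose_mat X = X"
    and unif: "map_pmf (upper_red I n) Xd = pmf_of_set (PiE (upper_idx n) (\<lambda>_. quot I))"
  shows "measure_pmf.prob Xd {X. cong_mat I (transpose_mat G * X * G) (0\<^sub>m n n)} =
         (\<Prod>i<n. \<Prod>j\<in>{i..<n}. real (ideal_norm (princ_plus (d i * d j) I)) / real (ideal_norm I))"
proof -
  obtain WU where Uc: "U \<in> carrier_mat n n" and WU: "WU \<in> carrier_mat n n" "cong_mat I (U * WU) (1\<^sub>m n)"
    using U by (auto simp: invertible_mod_def)
  obtain WV where Vc: "V \<in> carrier_mat n n" and WV: "WV \<in> carrier_mat n n" "cong_mat I (V * WV) (1\<^sub>m n)"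
    using V by (auto simp: invertible_mod_def)
  define D where "D = diag_of n d"
  have Dc: "D \<in> carrier_mat n n" by (simp add: D_def diag_of_def)
  have Dt: "transpose_mat D = D" by (rule eq_matI) (auto simp: D_def diag_of_def)
  define up where "up = upper_idx n"
  define T where "T = PiE up (\<lambda>_. quot I)"
  define E where "E X \<longleftrightarrow> cong_mat I (transpose_mat G * X * G) (0\<^sub>m n n)" for X
  define P where "P g \<longleftrightarrow> (\<forall>(i,j)\<in>up. d i * d j * rep (g (i,j)) \<in> I)" for g :: "nat \<times> nat \<Rightarrow> 'a set"
  define \<phi> where "\<phi> f = upper_red I n (transpose_mat U * mk_sym n f * U)" for f
  have finup: "finite up" unfolding up_def upper_idx_def
    by (rule finite_subset[of _ "{..<n} \<times> {..<n}"]) auto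
  have finT: "finite T" unfolding T_def using finup fin by (simp add: finite_PiE)
  have neT: "T \<noteq> {}" unfolding T_def quot_def by (simp add: PiE_eq_empty_iff)
  have Econg: "E X \<longleftrightarrow> E X'" if c: "cong_mat I X X'" and X: "X \<in> carrier_mat n n" for X X'
  proof -
    have "cong_mat I (transpose_mat G * X * G) (transpose_mat G * X' * G)"
      using G X by (intro cong_mult[OF I] cong_refl[OF I] c) auto
    then show ?thesis unfolding E_def by (meson cong_sym cong_trans I)
  qed
  have Yc: "transpose_mat U * X * U \<in> carrier_mat n n" if "X \<in> carrier_mat n n" for X
    using that Uc by (metis mult_carrier_mat transpose_carrier_mat)
  have Ys: "transpose_mat (transpose_mat U * X * U) = transpose_mat U * X * U"
    if "X \<in> carrier_mat n n" "transpose_mat X = X" for X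
    using that Uc by (simp add: transpose_mult[of _ n n _ n] assoc_mult_mat[of _ n n _ n _ n])
  have C1: "E (mk_sym n f) \<longleftrightarrow> P (\<phi> f)" for f
  proof -
    define X where "X = mk_sym n f"
    have Xc: "X \<in> carrier_mat n n" and Xs: "transpose_mat X = X"
      unfolding X_def by (rule mk_sym_carrier, rule mk_sym_sym)
    define Y where "Y = transpose_mat U * X * U"
    have Yc': "Y \<in> carrier_mat n n" unfolding Y_def by (rule Yc[OF Xc])
    have Ys': "transpose_mat Y = Y" unfolding Y_def by (rule Ys[OF Xc Xs])
    define Z where "Z = D * Y * D"
    have Zc: "Z \<in> carrier_mat n n" unfolding Z_def using Dc Yc' by (metis mult_carrier_mat)
    have UDV: "U * D * V \<in> carrier_mat n n" using Uc Dc Vc by (metis mult_carrier_mat)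
    have c1: "cong_mat I (transpose_mat G * X * G) (transpose_mat (U * D * V) * X * (U * D * V))"
      using G Xc SNF unfolding D_def
      by (intro cong_mult[OF I] cong_refl[OF I] cong_transpose) auto
    have e1: "transpose_mat (U * D * V) * X * (U * D * V) = transpose_mat V * Z * V"
      unfolding Z_def Y_def using Uc Dc Vc Xc Dt
      by (simp add: transpose_mult[of _ n n _ n] assoc_mult_mat[of _ n n _ n _ n])
    have "E X \<longleftrightarrow> cong_mat I (transpose_mat V * Z * V) (transpose_mat V * 0\<^sub>m n n * V)"
    proof -
      have z: "transpose_mat V * 0\<^sub>m n n * V = 0\<^sub>m n n" using Vc by simp
      show ?thesis unfolding E_def z using c1 e1 by (metis cong_sym cong_trans I)
    qed
    also have "\<dots> \<longleftrightarrow> cong_mat I Z (0\<^sub>m n n)"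
      by (rule cong_sandwich[OF I Vc WV Zc]) simp
    also have "\<dots> \<longleftrightarrow> P (upper_red I n Y)"
      unfolding Z_def D_def P_def up_def by (rule diag_cond[OF I Yc' Ys'])
    finally show ?thesis unfolding X_def Y_def \<phi>_def .
  qed
  have phiT: "\<phi> ` T \<subseteq> T" unfolding \<phi>_def T_def up_def using upper_red_in by blast
  have injphi: "inj_on \<phi> T"
  proof (rule inj_onI)
    fix f f' assume f: "f \<in> T" and f': "f' \<in> T" and eq: "\<phi> f = \<phi> f'"
    have Xc: "mk_sym n f \<in> carrier_mat n n" "mk_sym n f' \<in> carrier_mat n n" by (rule mk_sym_carrier)+
    have c: "cong_mat I (transpose_mat U * mk_sym n f * U) (transpose_mat U * mk_sym n f' * U)"
    proof -
      have a: "cong_mat I (transpose_mat U * mk_sym n f * U) (mk_sym n (\<phi> f))"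
        unfolding \<phi>_def by (rule cong_mk_sym[OF I Yc[OF Xc(1)] Ys[OF Xc(1) mk_sym_sym]])
      have b: "cong_mat I (transpose_mat U * mk_sym n f' * U) (mk_sym n (\<phi> f'))"
        unfolding \<phi>_def by (rule cong_mk_sym[OF I Yc[OF Xc(2)] Ys[OF Xc(2) mk_sym_sym]])
      show ?thesis using a b eq by (metis cong_sym cong_trans I)
    qed
    then have "cong_mat I (mk_sym n f) (mk_sym n f')"
      using cong_sandwich[OF I Uc WU Xc] by simp
    then have "upper_red I n (mk_sym n f) = upper_red I n (mk_sym n f')"
      by (rule upper_red_cong[OF I _ Xc(1)])
    then show "f = f'" using upper_red_mk_sym[OF I] f f' unfolding T_def up_def by metis
  qed
  have phiT': "\<phi> ` T = T"
    using phiT injphi finT by (metis card_image card_subset_eq)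
  have setT: "set_pmf (pmf_of_set T) = T" using finT neT by simp
  have redT: "upper_red I n X \<in> T" if "X \<in> set_pmf Xd" for X
    using that unif setT unfolding T_def up_def by (metis image_eqI set_map_pmf)
  define S where "S = {f\<in>T. E (mk_sym n f)}"
  have C3: "E X \<longleftrightarrow> upper_red I n X \<in> S" if X: "X \<in> set_pmf Xd" for X
  proof -
    have Xc: "X \<in> carrier_mat n n" and Xs: "transpose_mat X = X" using sym[OF X] by auto
    show ?thesis unfolding S_def using redT[OF X] Econg[OF cong_mk_sym[OF I Xc Xs] Xc] by simp
  qed
  have "measure_pmf.prob Xd {X. E X} = measure_pmf.prob Xd (upper_red I n -` S)"
    by (rule measure_pmf.finite_measure_eq_AE) (auto simp: AE_measure_pmf_iff C3)
  also have "\<dots> = measure_pmf.prob (map_pmf (upper_red I n) Xd) S" by simp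
  also have "\<dots> = real (card S) / real (card T)"
    unfolding unif T_def[symmetric] up_def[symmetric]
    using finT neT by (simp add: measure_pmf_of_set S_def Int_absorb1)
  also have "card S = card {g\<in>T. P g}"
  proof -
    have "S = {f\<in>T. P (\<phi> f)}" unfolding S_def using C1 by simp
    moreover have "\<phi> ` {f\<in>T. P (\<phi> f)} = {g\<in>T. P g}" using phiT' by auto
    moreover have "inj_on \<phi> {f\<in>T. P (\<phi> f)}" using injphi by (rule inj_on_subset) auto
    ultimately show ?thesis by (metis card_image)
  qed
  also have "{g\<in>T. P g} = PiE up (\<lambda>(i,j). {c\<in>quot I. d i * d j * rep c \<in> I})"
  proof (intro equalityI subsetI)
    fix g assume "g \<in> {g\<in>T. P g}"
    then show "g \<in> PiE up (\<lambda>(i,j). {c\<in>quot I. d i * d j * rep c \<in> I})"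
      unfolding T_def P_def PiE_iff by auto
  next
    fix g assume "g \<in> PiE up (\<lambda>(i,j). {c\<in>quot I. d i * d j * rep c \<in> I})"
    then show "g \<in> {g\<in>T. P g}"
      unfolding T_def P_def PiE_iff by auto
  qed
  also have "real (card \<dots>) = (\<Prod>x\<in>up. real (ideal_norm (princ_plus (d (fst x) * d (snd x)) I)))"
    using finup by (simp add: card_PiE case_prod_beta kernel_count[OF I fin])
  also have "real (card T) = (\<Prod>x\<in>up. real (ideal_norm I))"
    unfolding T_def using finup by (simp add: card_PiE ideal_norm_def)
  also have "(\<Prod>x\<in>up. real (ideal_norm (princ_plus (d (fst x) * d (snd x)) I))) / (\<Prod>x\<in>up. real (ideal_norm I))
      = (\<Prod>x\<in>up. real (ideal_norm (princ_plus (d (fst x) * d (snd x)) I)) / real (ideal_norm I))"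
    by (rule prod_dividef[symmetric])
  also have "\<dots> = (\<Prod>i<n. \<Prod>j\<in>{i..<n}. real (ideal_norm (princ_plus (d i * d j) I)) / real (ideal_norm I))"
  proof -
    have "up = Sigma {..<n} (\<lambda>i. {i..<n})" unfolding up_def upper_idx_def by auto
    then show ?thesis by (simp add: prod.Sigma case_prod_beta)
  qed
  finally show ?thesis unfolding E_def .
qed

end
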